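(* Let $G_s$ be a social network, $q$ a query user, $d\ge 1$ an integer, $e$ a set of users (an index node), and $spiv_1,\dots,spiv_h$ social-network pivot users. Let $lb_k(e)=\min_{u\in e} dist_{SN}(u,spiv_k)$ and $ub_k(e)=\max_{u\in e} dist_{SN}(u,spiv_k)$. Define $lb\_dist_{SN}(S,e)=\max_{k=1}^{h} c_k$, where $c_k=lb_k(e)-dist_{SN}(q,spiv_k)$ if $dist_{SN}(q,spiv_k)<lb_k(e)$, $c_k=dist_{SN}(q,spiv_k)-ub_k(e)$ if $dist_{SN}(q,spiv_k)>ub_k(e)$, and $c_k=0$ otherwise. If $lb\_dist_{SN}(S,e)>d$, then for every spatial-social $(k',d,\sigma,\theta)$-truss $S$ containing $q$ (for any $k',\sigma,\theta$ and query topic vector) no user of $e$ belongs to $S$.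
   Context: $dist_{SN}(u,v)$ is the minimum number of hops between users $u$ and $v$ in the social network $G_s$ (treated as a connected graph with symmetric hop distance, so all these distances are finite). The support of an edge in a subgraph $H$ of $G_s$ is the number of triangles of $H$ containing it. A connected subgraph $S$ is a $(k',d)$-truss if every edge of $S$ has support in $S$ at least $k'-2$ and $dist_{SN}(u,v)<d$ for all $u,v\in V(S)$. Users have check-in locations on a road network with shortest-path distance $dist_{RN}$, and $avg\_dist_{RN}(u,v)=\frac{1}{|u.L||v.L|}\sum_i\sum_j dist_{RN}(u.loc_i,v.loc_j)$. Each edge $e_{a,b}$ carries topic probabilities $tp^j_{a,b}$; for a query topic vector $\mathcal{T}_q$ the influence of a path $a_1\to\dots\to a_m$ is $\prod_i\sum_j tp^j_{a_i,a_{i+1}}\mathcal{T}_q^j$. A spatial-social $(k',d,\sigma,\theta)$-truss is a user set $S$ that is a $(k',d)$-truss, satisfies $avg\_dist_{RN}(u,v)<\sigma$ for all $u,v\in S$, and such that for all $u,v\in S$ some path from $u$ to $v$ within $S$ has influence at least $\theta$. *)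

theory Defs
  imports Complex_Main
begin

definition walk :: "('u \<Rightarrow> 'u \<Rightarrow> bool) \<Rightarrow> 'u list \<Rightarrow> bool" where
  "walk E p \<longleftrightarrow> p \<noteq> [] \<and> (\<forall>i. Suc i < length p \<longrightarrow> E (p ! i) (p ! Suc i))"

definition social_network :: "'u set \<Rightarrow> ('u \<Rightarrow> 'u \<Rightarrow> bool) \<Rightarrow> bool" where
  "social_network V E \<longleftrightarrow> finite V \<and> (\<forall>a b. E a b \<longrightarrow> a \<in> V \<and> b \<in> V \<and> E b a \<and> a \<noteq> b)
     \<and> (\<forall>u\<in>V. \<forall>v\<in>V. \<exists>p. walk E p \<and> hd p = u \<and> last p = v)"

definition dist_SN :: "('u \<Rightarrow> 'u \<Rightarrow> bool) \<Rightarrow> 'u \<Rightarrow> 'u \<Rightarrow> nat" where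
  "dist_SN E u v = (LEAST n. \<exists>p. walk E p \<and> hd p = u \<and> last p = v \<and> length p = Suc n)"

definition subgraph :: "('u \<Rightarrow> 'u \<Rightarrow> bool) \<Rightarrow> 'u set \<Rightarrow> 'u set \<Rightarrow> ('u \<times> 'u) set \<Rightarrow> bool" where
  "subgraph E V S ES \<longleftrightarrow> S \<subseteq> V \<and> (\<forall>(a,b)\<in>ES. E a b \<and> a \<in> S \<and> b \<in> S \<and> (b,a) \<in> ES)"

definition support :: "'u set \<Rightarrow> ('u \<times> 'u) set \<Rightarrow> 'u \<Rightarrow> 'u \<Rightarrow> nat" where
  "support S ES a b = card {c \<in> S. (a,c) \<in> ES \<and> (b,c) \<in> ES}"

definition connected_sub :: "'u set \<Rightarrow> ('u \<times> 'u) set \<Rightarrow> bool" where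
  "connected_sub S ES \<longleftrightarrow> (\<forall>u\<in>S. \<forall>v\<in>S. \<exists>p. walk (\<lambda>a b. (a,b) \<in> ES) p \<and> hd p = u \<and> last p = v)"

definition kd_truss :: "'u set \<Rightarrow> ('u \<Rightarrow> 'u \<Rightarrow> bool) \<Rightarrow> 'u set \<Rightarrow> ('u \<times> 'u) set \<Rightarrow> nat \<Rightarrow> nat \<Rightarrow> bool" where
  "kd_truss V E S ES k' d \<longleftrightarrow> subgraph E V S ES \<and> connected_sub S ES
     \<and> (\<forall>(a,b)\<in>ES. int (support S ES a b) \<ge> int k' - 2)
     \<and> (\<forall>u\<in>S. \<forall>v\<in>S. dist_SN E u v < d)"

text \<open>Road network: locations of type 'l, shortest path distance dRN; check-in lists loc u.\<close>
definition avg_dist_RN :: "('l \<Rightarrow> 'l \<Rightarrow> real) \<Rightarrow> ('u \<Rightarrow> 'l list) \<Rightarrow> 'u \<Rightarrow> 'u \<Rightarrow> real" where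
  "avg_dist_RN dRN loc u v =
     (\<Sum>i<length (loc u). \<Sum>j<length (loc v). dRN (loc u ! i) (loc v ! j))
       / (real (length (loc u)) * real (length (loc v)))"

text \<open>Topics are indexed 0..<nT; tp a b j is the probability of topic j on edge (a,b).\<close>
definition influence :: "('u \<Rightarrow> 'u \<Rightarrow> nat \<Rightarrow> real) \<Rightarrow> nat \<Rightarrow> (nat \<Rightarrow> real) \<Rightarrow> 'u list \<Rightarrow> real" where
  "influence tp nT Tq p = (\<Prod>i<length p - 1. \<Sum>j<nT. tp (p ! i) (p ! Suc i) j * Tq j)"

definition ss_truss ::
  "'u set \<Rightarrow> ('u \<Rightarrow> 'u \<Rightarrow> bool) \<Rightarrow> ('l \<Rightarrow> 'l \<Rightarrow> real) \<Rightarrow> ('u \<Rightarrow> 'l list) \<Rightarrow>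
   ('u \<Rightarrow> 'u \<Rightarrow> nat \<Rightarrow> real) \<Rightarrow> nat \<Rightarrow> (nat \<Rightarrow> real) \<Rightarrow>
   'u set \<Rightarrow> ('u \<times> 'u) set \<Rightarrow> nat \<Rightarrow> nat \<Rightarrow> real \<Rightarrow> real \<Rightarrow> bool" where
  "ss_truss V E dRN loc tp nT Tq S ES k' d \<sigma> \<theta> \<longleftrightarrow>
     kd_truss V E S ES k' d
     \<and> (\<forall>u\<in>S. \<forall>v\<in>S. avg_dist_RN dRN loc u v < \<sigma>)
     \<and> (\<forall>u\<in>S. \<forall>v\<in>S. \<exists>p. walk E p \<and> set p \<subseteq> S \<and> hd p = u \<and> last p = v
                          \<and> influence tp nT Tq p \<ge> \<theta>)"

definition lb_k :: "('u \<Rightarrow> 'u \<Rightarrow> bool) \<Rightarrow> 'u set \<Rightarrow> 'u \<Rightarrow> nat" where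
  "lb_k E e p = Min ((\<lambda>u. dist_SN E u p) ` e)"

definition ub_k :: "('u \<Rightarrow> 'u \<Rightarrow> bool) \<Rightarrow> 'u set \<Rightarrow> 'u \<Rightarrow> nat" where
  "ub_k E e p = Max ((\<lambda>u. dist_SN E u p) ` e)"

definition c_k :: "('u \<Rightarrow> 'u \<Rightarrow> bool) \<Rightarrow> 'u \<Rightarrow> 'u set \<Rightarrow> 'u \<Rightarrow> int" where
  "c_k E q e p =
     (if dist_SN E q p < lb_k E e p then int (lb_k E e p) - int (dist_SN E q p)
      else if dist_SN E q p > ub_k E e p then int (dist_SN E q p) - int (ub_k E e p)
      else 0)"

definition lb_dist_SN :: "('u \<Rightarrow> 'u \<Rightarrow> bool) \<Rightarrow> 'u \<Rightarrow> 'u set \<Rightarrow> nat \<Rightarrow> (nat \<Rightarrow> 'u) \<Rightarrow> int" where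
  "lb_dist_SN E q e h spiv = Max ((\<lambda>k. c_k E q e (spiv k)) ` {1..h})"

end

theory Submission
  imports Defs
begin

lemma walk_Cons: "walk E (x # p) \<longleftrightarrow> (p = [] \<or> (E x (hd p) \<and> walk E p))"
proof
  assume w: "walk E (x # p)"
  show "p = [] \<or> (E x (hd p) \<and> walk E p)"
  proof (cases "p = []")
    case False
    have "E x (hd p)" using w False unfolding walk_def
      by (metis hd_conv_nth length_Cons length_greater_0_conv nat.inject nth_Cons_0 nth_Cons_Suc zero_less_Suc Suc_less_eq)
    moreover have "walk E p" using w False unfolding walk_def
      by (metis Suc_less_eq length_Cons nth_Cons_Suc)
    ultimately show ?thesis by simp
  qed simp
next
  assume h: "p = [] \<or> (E x (hd p) \<and> walk E p)"
  show "walk E (x # p)"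
  proof (cases "p = []")
    case True then show ?thesis by (simp add: walk_def)
  next
    case False
    with h have a: "E x (hd p)" "walk E p" by auto
    show ?thesis unfolding walk_def
    proof (intro conjI allI impI)
      fix i assume i: "Suc i < length (x # p)"
      show "E ((x # p) ! i) ((x # p) ! Suc i)"
      proof (cases i)
        case 0 then show ?thesis using a False by (simp add: hd_conv_nth)
      next
        case (Suc j) then show ?thesis using a i by (simp add: walk_def)
      qed
    qed simp
  qed
qed

lemma walk_rev:
  assumes "walk E p" and sym: "\<forall>a b. E a b \<longrightarrow> E b a"
  shows "walk E (rev p)"
  unfolding walk_def
proof (intro conjI allI impI)
  show "rev p \<noteq> []" using assms(1) by (simp add: walk_def)
  fix i assume i: "Suc i < length (rev p)"
  have "E (p ! (length p - Suc (Suc i))) (p ! Suc (length p - Suc (Suc i)))"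
    using assms(1) i by (simp add: walk_def)
  moreover have "Suc (length p - Suc (Suc i)) = length p - Suc i" using i by simp
  ultimately show "E (rev p ! i) (rev p ! Suc i)" using i sym by (simp add: rev_nth)
qed

lemma walk_app:
  "walk E p \<Longrightarrow> walk E r \<Longrightarrow> last p = hd r \<Longrightarrow>
    walk E (p @ tl r) \<and> hd (p @ tl r) = hd p \<and> last (p @ tl r) = last r"
proof (induction p)
  case Nil then show ?case by (simp add: walk_def)
next
  case (Cons a p)
  have r: "r \<noteq> []" using Cons.prems by (simp add: walk_def)
  show ?case
  proof (cases "p = []")
    case True
    then have "a # tl r = r" using Cons.prems r by simp
    then show ?thesis using True Cons.prems by simp
  next
    case False
    have wp: "walk E p" "E a (hd p)" using Cons.prems(1) False by (auto simp: walk_Cons)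
    from Cons.IH[OF wp(1) Cons.prems(2)] Cons.prems(3) False
    have ih: "walk E (p @ tl r)" "hd (p @ tl r) = hd p" "last (p @ tl r) = last r" by auto
    have "walk E (a # (p @ tl r))" using ih wp False by (simp add: walk_Cons)
    moreover have "last ((a # p) @ tl r) = last r" using ih False by simp
    ultimately show ?thesis by simp
  qed
qed

lemma dist_ex:
  assumes "\<exists>p. walk E p \<and> hd p = u \<and> last p = v"
  shows "\<exists>p. walk E p \<and> hd p = u \<and> last p = v \<and> length p = Suc (dist_SN E u v)"
proof -
  obtain p where p: "walk E p" "hd p = u" "last p = v" using assms by blast
  have "p \<noteq> []" using p by (simp add: walk_def)
  then have "\<exists>n. \<exists>p. walk E p \<and> hd p = u \<and> last p = v \<and> length p = Suc n"
    using p by (intro exI[of _ "length p - 1"] exI[of _ p]) auto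
  then show ?thesis unfolding dist_SN_def by (rule LeastI_ex)
qed

lemma dist_le:
  assumes "walk E p" "hd p = u" "last p = v"
  shows "dist_SN E u v \<le> length p - 1"
proof -
  have "p \<noteq> []" using assms by (simp add: walk_def)
  then have "\<exists>p'. walk E p' \<and> hd p' = u \<and> last p' = v \<and> length p' = Suc (length p - 1)"
    using assms by (intro exI[of _ p]) auto
  then show ?thesis unfolding dist_SN_def by (rule Least_le)
qed

lemma dist_tri:
  assumes "\<exists>p. walk E p \<and> hd p = x \<and> last p = y" "\<exists>p. walk E p \<and> hd p = y \<and> last p = z"
  shows "dist_SN E x z \<le> dist_SN E x y + dist_SN E y z"
proof -
  obtain p where p: "walk E p" "hd p = x" "last p = y" "length p = Suc (dist_SN E x y)"
    using dist_ex[OF assms(1)] by blast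
  obtain r where r: "walk E r" "hd r = y" "last r = z" "length r = Suc (dist_SN E y z)"
    using dist_ex[OF assms(2)] by blast
  have w: "walk E (p @ tl r)" "hd (p @ tl r) = x" "last (p @ tl r) = z"
    using walk_app[OF p(1) r(1)] p r by auto
  have "length (p @ tl r) - 1 = dist_SN E x y + dist_SN E y z" using p r by simp
  with dist_le[OF w] show ?thesis by simp
qed

lemma dist_sym:
  assumes "\<exists>p. walk E p \<and> hd p = x \<and> last p = y" and sym: "\<forall>a b. E a b \<longrightarrow> E b a"
  shows "dist_SN E y x \<le> dist_SN E x y"
proof -
  obtain p where p: "walk E p" "hd p = x" "last p = y" "length p = Suc (dist_SN E x y)"
    using dist_ex[OF assms(1)] by blast
  have ne: "p \<noteq> []" using p by (simp add: walk_def)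
  have "walk E (rev p)" using walk_rev[OF p(1) sym] .
  moreover have "hd (rev p) = y" "last (rev p) = x" using p ne by (auto simp: hd_rev last_rev)
  ultimately have "dist_SN E y x \<le> length (rev p) - 1" by (rule dist_le)
  then show ?thesis using p by simp
qed

theorem lemma8:
  fixes V :: "'u set" and E :: "'u \<Rightarrow> 'u \<Rightarrow> bool"
    and dRN :: "'l \<Rightarrow> 'l \<Rightarrow> real" and loc :: "'u \<Rightarrow> 'l list"
    and tp :: "'u \<Rightarrow> 'u \<Rightarrow> nat \<Rightarrow> real" and nT :: nat
    and q :: 'u and d :: nat and e :: "'u set" and h :: nat and spiv :: "nat \<Rightarrow> 'u"
  assumes "social_network V E"
    and "q \<in> V" and "d \<ge> 1"
    and "e \<subseteq> V" and "e \<noteq> {}"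
    and "h \<ge> 1" and "\<forall>k\<in>{1..h}. spiv k \<in> V"
    and "lb_dist_SN E q e h spiv > int d"
  shows "\<forall>S ES k' \<sigma> \<theta> Tq. ss_truss V E dRN loc tp nT Tq S ES k' d \<sigma> \<theta> \<and> q \<in> S
           \<longrightarrow> (\<forall>u\<in>e. u \<notin> S)"
proof (intro allI impI ballI notI)
  fix S ES k' \<sigma> \<theta> Tq u
  assume st: "ss_truss V E dRN loc tp nT Tq S ES k' d \<sigma> \<theta> \<and> q \<in> S" and ue: "u \<in> e" and us: "u \<in> S"
  have sn: "finite V" "\<forall>a b. E a b \<longrightarrow> E b a"
    "\<forall>x\<in>V. \<forall>y\<in>V. \<exists>p. walk E p \<and> hd p = x \<and> last p = y"
    using assms(1) unfolding social_network_def by auto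
  have fe: "finite e" using sn(1) assms(4) finite_subset by blast
  have uV: "u \<in> V" using ue assms(4) by blast
  have dqu: "dist_SN E q u < d" using st us unfolding ss_truss_def kd_truss_def by blast
  have ck: "c_k E q e (spiv k) \<le> int (dist_SN E q u)" if k: "k \<in> {1..h}" for k
  proof -
    define p where "p = spiv k"
    have pV: "p \<in> V" using k assms(7) p_def by blast
    define a where "a = dist_SN E q p"
    define b where "b = dist_SN E u p"
    define c where "c = dist_SN E q u"
    have lb: "lb_k E e p \<le> b" unfolding lb_k_def b_def using fe ue by simp
    have ub: "b \<le> ub_k E e p" unfolding ub_k_def b_def using fe ue by simp
    have t1: "a \<le> c + b" unfolding a_def b_def c_def
      using dist_tri[of E q u p] sn(3) assms(2) uV pV by blast
    have t2: "b \<le> dist_SN E u q + a" unfolding a_def b_def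
      using dist_tri[of E u q p] sn(3) assms(2) uV pV by blast
    have t3: "dist_SN E u q \<le> c" unfolding c_def
      using dist_sym[of E q u] sn assms(2) uV by blast
    show ?thesis unfolding c_k_def p_def[symmetric] a_def[symmetric] c_def[symmetric]
      using lb ub t1 t2 t3 by auto
  qed
  have "lb_dist_SN E q e h spiv \<le> int (dist_SN E q u)"
    unfolding lb_dist_SN_def using ck assms(6) by (subst Max_le_iff) auto
  with assms(8) dqu show False by simp
qed

end
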